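(* Let $\omega_2\in\mathbb{D}$, $\omega_1,\omega_4\in\overline{\mathbb{D}}$, $\alpha_1,\alpha_2,\alpha_3,\beta_1,\beta_2,\gamma\in\mathbb{C}$, and $$T=\begin{pmatrix}\omega_1&\alpha_1&\beta_1&\gamma\\0&\omega_2&\alpha_2&\beta_2\\0&0&0&\alpha_3\\0&0&0&\omega_4\end{pmatrix}\in\mathcal{M}_4(\mathbb{C}).$$ Write $\delta_i=1-|\omega_i|^2$ for $i=1,2,4$. Then $T$ is a contraction on $\mathbb{C}^4$ if and only if one of the following holds: (A) $|\alpha_1|^2\le\delta_1\delta_2$, $|\alpha_3|^2\le\delta_4$, $|\alpha_2|^2=\delta_2$, $\beta_1=-\dfrac{\alpha_1\alpha_2\overline{\omega_2}}{\delta_2}$, $\beta_2=0$, and $$|\gamma|^2\delta_2\le(\delta_1\delta_2-|\alpha_1|^2)(\delta_4-|\alpha_3|^2);$$ (B) $|\alpha_1|^2\le\delta_1\delta_2$, $|\alpha_3|^2\le\delta_4$, $|\alpha_2|^2<\delta_2$, $$|\beta_1\delta_2+\alpha_1\alpha_2\overline{\omega_2}|^2\le(\delta_1\delta_2-|\alpha_1|^2)(\delta_2-|\alpha_2|^2),\qquad |\beta_2|^2\le(\delta_2-|\alpha_2|^2)(\delta_4-|\alpha_3|^2),$$ and $$\big|\gamma(\delta_2-|\alpha_2|^2)+\beta_2(\overline{\omega_2}\alpha_1+\overline{\alpha_2}\beta_1)\big|^2\delta_2\le\Big[(\delta_1\delta_2-|\alpha_1|^2)(\delta_2-|\alpha_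2|^2)-|\beta_1\delta_2+\alpha_1\alpha_2\overline{\omega_2}|^2\Big]\cdot\Big[(\delta_2-|\alpha_2|^2)(\delta_4-|\alpha_3|^2)-|\beta_2|^2\Big].$$
   Context: $\mathbb{D}$ denotes the open unit disk in $\mathbb{C}$ and $\overline{\mathbb{D}}$ the closed unit disk. $\mathbb{C}^4$ carries its standard inner product, and a matrix $T$ is a contraction if its Euclidean operator norm satisfies $\|T\|\le1$. $\overline{z}$ denotes complex conjugation. *)

theory Defs
  imports "HOL-Analysis.Analysis"
begin

definition Tmat :: "complex \<Rightarrow> complex \<Rightarrow> complex \<Rightarrow> complex \<Rightarrow> complex \<Rightarrow> complex \<Rightarrow>
    complex \<Rightarrow> complex \<Rightarrow> complex \<Rightarrow> complex ^ 4 ^ 4" where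
  "Tmat w1 w2 w4 a1 a2 a3 b1 b2 g =
     vector [vector [w1, a1, b1, g],
             vector [0, w2, a2, b2],
             vector [0, 0, 0, a3],
             vector [0, 0, 0, w4]]"

definition contraction :: "complex ^ 4 ^ 4 \<Rightarrow> bool" where
  "contraction T \<longleftrightarrow> onorm (\<lambda>x. T *v x) \<le> 1"

end

theory Submission
  imports Defs
begin


lemma vector_4 [simp]:
 "(vector [x,y,z,w] ::('a::zero)^4)$1 = x"
 "(vector [x,y,z,w] ::('a::zero)^4)$2 = y"
 "(vector [x,y,z,w] ::('a::zero)^4)$3 = z"
 "(vector [x,y,z,w] ::('a::zero)^4)$4 = w"
  unfolding vector_def by simp_all

lemma contr_iff: "contraction A \<longleftrightarrow> (\<forall>x. norm (A *v x) \<le> norm x)"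
proof
  assume "contraction A"
  then have "onorm ((*v) A) \<le> 1" by (simp add: contraction_def)
  then show "\<forall>x. norm (A *v x) \<le> norm x"
    using onorm[OF matrix_vector_mul_bounded_linear, of A] mult_right_mono[of _ 1] by (metis mult_1 norm_ge_zero order_trans)
next
  assume "\<forall>x. norm (A *v x) \<le> norm x"
  then show "contraction A" unfolding contraction_def by (intro onorm_le) simp
qed

definition cadj :: "complex^'n^'m \<Rightarrow> complex^'m^'n" where
  "cadj A = (\<chi> i j. cnj (A$j$i))"

lemma inner_complex_Re: "inner (z::complex) w = Re (z * cnj w)"
  by (simp add: inner_complex_def)

lemma inner_adj: "inner (A *v x) y = inner x (cadj A *v y)"
proof -
  have "inner (A *v x) y = Re (\<Sum>i\<in>UNIV. \<Sum>j\<in>UNIV. A$i$j * x$j * cnj (y$i))"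
    by (simp add: inner_vec_def matrix_vector_mult_def inner_complex_Re sum_distrib_right Re_sum)
  also have "\<dots> = Re (\<Sum>j\<in>UNIV. \<Sum>i\<in>UNIV. A$i$j * x$j * cnj (y$i))"
    by (subst sum.swap) simp
  also have "\<dots> = inner x (cadj A *v y)"
    by (simp add: inner_vec_def matrix_vector_mult_def inner_complex_Re cadj_def sum_distrib_left Re_sum mult_ac)
  finally show ?thesis .
qed

lemma cadj_cadj[simp]: "cadj (cadj A) = A"
  by (simp add: cadj_def vec_eq_iff)

lemma contr_adj1:
  assumes "\<forall>x. norm (A *v x) \<le> norm x"
  shows "norm (cadj A *v y) \<le> norm y"
proof -
  let ?z = "cadj A *v y"
  have "norm ?z ^ 2 = inner ?z ?z" by (simp add: power2_norm_eq_inner)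
  also have "\<dots> = inner (A *v ?z) y" by (simp add: inner_adj)
  also have "\<dots> \<le> norm (A *v ?z) * norm y" using norm_cauchy_schwarz by blast
  also have "\<dots> \<le> norm ?z * norm y" using assms by (simp add: mult_right_mono)
  finally have "norm ?z * norm ?z \<le> norm ?z * norm y" by (simp add: power2_eq_square)
  then show ?thesis
    by (cases "norm ?z = 0") (auto simp: mult_le_cancel_left)
qed

lemma contr_adj: "(\<forall>x. norm (A *v x) \<le> norm x) \<longleftrightarrow> (\<forall>y. norm (cadj A *v y) \<le> norm y)"
  using contr_adj1[of A] contr_adj1[of "cadj A"] by auto

lemma norm4: "norm (x::complex^4) ^ 2 = norm (x$1)^2 + norm (x$2)^2 + norm (x$3)^2 + norm (x$4)^2"
  unfolding norm_vec_def L2_set_def by (simp add: sum_4 sum_nonneg)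



lemma herm_id:
  fixes A C :: real and B y1 y2 :: complex
  shows "A * (A * cmod y1^2 + C * cmod y2^2 + 2 * Re (B * cnj y1 * y2)) = cmod (A*y1 + B*y2)^2 + (A*C - cmod B^2) * cmod y2^2"
  unfolding cmod_power2 by (simp add: algebra_simps power2_eq_square)

lemma herm2:
  fixes A C :: real and B :: complex
  shows "(\<forall>y1 y2. 0 \<le> A * cmod y1^2 + C * cmod y2^2 + 2 * Re (B * cnj y1 * y2)) \<longleftrightarrow>
         (0 \<le> A \<and> 0 \<le> C \<and> cmod B^2 \<le> A*C)"
proof
  assume H: "\<forall>y1 y2. 0 \<le> A * cmod y1^2 + C * cmod y2^2 + 2 * Re (B * cnj y1 * y2)"
  have A: "0 \<le> A" using H[rule_format, of 1 0] by simp
  have C: "0 \<le> C" using H[rule_format, of 0 1] by simp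
  have "cmod B^2 \<le> A*C"
  proof (cases "A = 0")
    case True
    show ?thesis
    proof (rule ccontr)
      assume "\<not> ?thesis"
      then have Bp: "cmod B^2 > 0" using True by simp
      define t where "t = (C + 1) / (2 * cmod B^2)"
      have "0 \<le> A * cmod (- (of_real t * B))^2 + C * cmod (1::complex)^2 + 2 * Re (B * cnj (- (of_real t * B)) * 1)"
        using H by blast
      also have "\<dots> = C - 2 * t * cmod B^2"
        unfolding cmod_power2 using True by (simp add: algebra_simps power2_eq_square)
      also have "\<dots> = -1" using Bp by (simp add: t_def field_simps)
      finally show False by simp
    qed
  next
    case False
    then have Ap: "A > 0" using A by simp
    have "0 \<le> A * cmod (- B)^2 + C * cmod (complex_of_real A)^2 + 2 * Re (B * cnj (- B) * complex_of_real A)"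
      using H by blast
    also have "\<dots> = A * (A * C - cmod B^2)"
      by (simp add: complex_norm_square[symmetric] power2_eq_square algebra_simps)
    finally show ?thesis using Ap by (simp add: zero_le_mult_iff)
  qed
  then show "0 \<le> A \<and> 0 \<le> C \<and> cmod B^2 \<le> A*C" using A C by simp
next
  assume H: "0 \<le> A \<and> 0 \<le> C \<and> cmod B^2 \<le> A*C"
  show "\<forall>y1 y2. 0 \<le> A * cmod y1^2 + C * cmod y2^2 + 2 * Re (B * cnj y1 * y2)"
  proof (intro allI)
    fix y1 y2 :: complex
    show "0 \<le> A * cmod y1^2 + C * cmod y2^2 + 2 * Re (B * cnj y1 * y2)"
    proof (cases "A = 0")
      case True
      then have "B = 0" using H by simp
      then show ?thesis using True H by simp
    next
      case False
      then have Ap: "A > 0" using H by simp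
      have "0 \<le> cmod (A*y1 + B*y2)^2 + (A*C - cmod B^2) * cmod y2^2" using H by simp
      then have "0 \<le> A * (A * cmod y1^2 + C * cmod y2^2 + 2 * Re (B * cnj y1 * y2))"
        by (simp only: herm_id)
      then show ?thesis using Ap by (simp add: zero_le_mult_iff)
    qed
  qed
qed



lemma elim_aux:
  fixes u c1 c2 z :: complex and P l :: real
  assumes H: "\<forall>v1 v2. cmod(u + c1 * v1 + c2 * v2)^2 \<le> cmod v1^2 + cmod v2^2 + P"
  shows "cmod(u + of_real (l * (cmod c1^2 + cmod c2^2)) * z)^2 \<le> l^2 * (cmod c1^2 + cmod c2^2) * cmod z^2 + P"
proof -
  have eq: "c1 * (of_real l * cnj c1 * z) + c2 * (of_real l * cnj c2 * z) = of_real (l * (cmod c1^2 + cmod c2^2)) * z"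
  proof -
    have h: "\<And>c. c * cnj c = complex_of_real (cmod c)^2"
      by (metis complex_norm_square of_real_power)
    have "of_real (l * (cmod c1^2 + cmod c2^2)) * z = of_real l * z * (c1 * cnj c1 + c2 * cnj c2)"
      by (simp add: h algebra_simps)
    then show ?thesis by (simp add: algebra_simps)
  qed
  have n: "cmod (of_real l * cnj c1 * z)^2 + cmod (of_real l * cnj c2 * z)^2 = l^2 * (cmod c1^2 + cmod c2^2) * cmod z^2"
    by (simp add: norm_mult power_mult_distrib algebra_simps)
  show ?thesis using H[rule_format, of "of_real l * cnj c1 * z" "of_real l * cnj c2 * z"]
    by (simp only: add.assoc eq n)
qed

lemma cs2: "((p::real)*q + r * s)^2 \<le> (p^2+r^2)*(q^2+s^2)"
proof -
  have "(p*q + r * s)^2 + (p * s-r*q)^2 = (p^2+r^2)*(q^2+s^2)" by algebra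
  then show ?thesis by (metis le_add_same_cancel1 zero_le_power2)
qed

lemma elim2:
  fixes u c1 c2 :: complex and P e :: real
  assumes e: "e = 1 - cmod c1^2 - cmod c2^2"
  shows "(\<forall>v1 v2. cmod(u + c1 * v1 + c2 * v2)^2 \<le> cmod v1^2 + cmod v2^2 + P) \<longleftrightarrow> (0 \<le> e \<and> 0 \<le> P \<and> cmod u^2 \<le> e*P)"
proof
  assume H: "\<forall>v1 v2. cmod(u + c1 * v1 + c2 * v2)^2 \<le> cmod v1^2 + cmod v2^2 + P"
  define k where "k = cmod c1^2 + cmod c2^2"
  have k0: "0 \<le> k" by (simp add: k_def)
  have ek: "e + k = 1" by (simp add: e k_def)
  have Hl: "\<And>l z. cmod(u + of_real (l * k) * z)^2 \<le> l^2 * k * cmod z^2 + P"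
    unfolding k_def by (rule elim_aux[OF H])
  have uP: "cmod u^2 \<le> P" using H[rule_format, of 0 0] by simp
  then have P0: "0 \<le> P" by (meson order_trans zero_le_power2)
  have Hu: "cmod u^2 * ((1 + l*k)^2 - l^2*k) \<le> P" if "l \<ge> 0" for l
  proof -
    have "cmod(u + of_real (l * k) * u) = cmod u * (1 + l*k)"
    proof -
      have "u + of_real (l * k) * u = of_real (1 + l*k) * u" by (simp add: algebra_simps)
      then have "cmod(u + of_real (l * k) * u) = \<bar>1 + l*k\<bar> * cmod u" by (simp only: norm_mult norm_of_real)
      then show ?thesis using that k0 by simp
    qed
    then have "(cmod u * (1 + l*k))^2 \<le> l^2 * k * cmod u^2 + P" using Hl[of l u] by simp
    then show ?thesis by (simp only: power_mult_distrib right_diff_distrib) (simp add: algebra_simps)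
  qed
  have e0: "0 \<le> e"
  proof (rule ccontr)
    assume "\<not> 0 \<le> e"
    then have en: "e < 0" by simp
    then have kp: "k > 0" using ek by simp
    obtain z :: complex where z: "z \<noteq> 0" "\<forall>l. l \<ge> 0 \<longrightarrow> cmod(u + of_real (l * k) * z)^2 \<ge> l^2 * k^2 * cmod z^2"
    proof (cases "u = 0")
      case True
      show ?thesis by (rule that[of 1]) (simp_all add: True norm_mult power_mult_distrib abs_mult)
    next
      case False
      have "l^2 * k^2 * cmod u^2 \<le> cmod(u + of_real (l * k) * u)^2" if "l \<ge> 0" for l
      proof -
        have "u + of_real (l * k) * u = of_real (1 + l*k) * u" by (simp add: algebra_simps)
        then have "cmod(u + of_real (l * k) * u) = \<bar>1 + l*k\<bar> * cmod u" by (simp only: norm_mult norm_of_real)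
        then have "cmod(u + of_real (l * k) * u)^2 = (1+l*k)^2 * cmod u^2"
          using that k0 by (simp add: power_mult_distrib)
        moreover have "(l*k)^2 \<le> (1+l*k)^2" using that k0 by (intro power_mono) auto
        ultimately show ?thesis by (simp add: power_mult_distrib mult_right_mono)
      qed
      then show ?thesis using False by (intro that[of u]) auto
    qed
    define n where "n = cmod z^2"
    have np: "n > 0" using z by (simp add: n_def)
    define l where "l = sqrt ((P+1) / (k*n*(-e)))"
    have q: "0 < (P+1)/(k*n*(-e))" using np kp en P0 by (intro divide_pos_pos mult_pos_pos) auto
    have l0: "l \<ge> 0" unfolding l_def using q by (intro real_sqrt_ge_zero) linarith
    have "l^2 = (P+1)/(k*n*(-e))" using q by (simp add: l_def)
    then have l2: "l^2 * (k*n*(-e)) = P + 1" using np kp en by simp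
    have "l^2 * k^2 * n \<le> l^2 * k * n + P"
      using z(2)[rule_format, OF l0] Hl[of l z] unfolding n_def by linarith
    moreover have me: "-e = k - 1" using ek by simp
    have "l^2 * (k*n*(-e)) = l^2*k^2*n - l^2*k*n" unfolding me by (simp add: algebra_simps power2_eq_square)
    ultimately have "l^2 * (k*n*(-e)) \<le> P" by linarith
    then show False using l2 by simp
  qed
  have "cmod u^2 \<le> e*P"
  proof (cases "e = 0")
    case True
    show ?thesis
    proof (rule ccontr)
      assume "\<not> ?thesis"
      then have up: "cmod u^2 > 0" using True by simp
      define l where "l = P / (2 * cmod u^2)"
      have l0: "l \<ge> 0" using P0 up by (simp add: l_def)
      have "k = 1" using True ek by simp
      then have "cmod u^2 * ((1 + l)^2 - l^2) \<le> P" using Hu[OF l0] by simp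
      then have "cmod u^2 + 2 * l * cmod u^2 \<le> P" by (simp add: algebra_simps power2_eq_square)
      then show False using up by (simp add: l_def)
    qed
  next
    case False
    then have ep: "e > 0" using e0 by simp
    have "cmod u^2 * ((1 + (1/e)*k)^2 - (1/e)^2*k) \<le> P" using Hu[of "1/e"] ep by simp
    moreover have "(1 + (1/e)*k)^2 - (1/e)^2*k = 1/e"
    proof -
      have kk: "k = 1 - e" using ek by simp
      have "1 + (1/e)*k = 1/e" unfolding kk using ep by (simp add: field_simps)
      then show ?thesis unfolding kk using ep by (simp add: field_simps power2_eq_square)
    qed
    ultimately have "cmod u^2 / e \<le> P" by simp
    then show ?thesis using ep by (simp add: field_simps mult.commute)
  qed
  then show "0 \<le> e \<and> 0 \<le> P \<and> cmod u^2 \<le> e*P" using e0 P0 by simp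
next
  assume H: "0 \<le> e \<and> 0 \<le> P \<and> cmod u^2 \<le> e*P"
  show "\<forall>v1 v2. cmod(u + c1 * v1 + c2 * v2)^2 \<le> cmod v1^2 + cmod v2^2 + P"
  proof (intro allI)
    fix v1 v2 :: complex
    define k where "k = cmod c1^2 + cmod c2^2"
    define V where "V = cmod v1^2 + cmod v2^2"
    define Au where "Au = cmod u"
    define Bv where "Bv = cmod (c1 * v1 + c2 * v2)"
    have k0: "0 \<le> k" "0 \<le> V" "0 \<le> Au" "0 \<le> Bv" by (simp_all add: k_def V_def Au_def Bv_def)
    have ek: "e + k = 1" by (simp add: e k_def)
    have "Bv \<le> cmod c1 * cmod v1 + cmod c2 * cmod v2"
      unfolding Bv_def by (metis norm_mult norm_triangle_ineq)
    then have "Bv^2 \<le> (cmod c1 * cmod v1 + cmod c2 * cmod v2)^2" using k0 by (simp add: power_mono)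
    also have "\<dots> \<le> k * V" unfolding k_def V_def by (rule cs2)
    finally have B2: "Bv^2 \<le> k*V" .
    have A2: "Au^2 \<le> e*P" using H by (simp add: Au_def)
    have "(2*Au*Bv)^2 = 4 * Au^2 * Bv^2" by (simp add: power_mult_distrib)
    also have "\<dots> \<le> 4 * (e*P) * (k*V)"
    proof -
      have "Au^2 * Bv^2 \<le> (e*P) * (k*V)"
        by (rule mult_mono[OF A2 B2]) (use H k0 in auto)
      then show ?thesis by simp
    qed
    also have "\<dots> \<le> (k*P + e*V)^2"
    proof -
      have "(k*P + e*V)^2 - 4 * (e*P) * (k*V) = (k*P - e*V)^2" by algebra
      then show ?thesis by (metis diff_ge_0_iff_ge zero_le_power2)
    qed
    finally have sq: "(2*Au*Bv)^2 \<le> (k*P+e*V)^2" .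
    have nn: "0 \<le> k*P + e*V" using k0 H by simp
    have AB: "2*Au*Bv \<le> k*P+e*V" using power2_le_imp_le[OF sq nn] .
    have s1: "(Au+Bv)^2 = Au^2 + 2*Au*Bv + Bv^2" by (simp add: power2_sum)
    have s2: "e*P + (k*P+e*V) + k*V = (e+k)*(P+V)" by algebra
    have "(Au + Bv)^2 \<le> V + P" using s1 s2 ek AB A2 B2 by simp
    moreover have "cmod(u + c1 * v1 + c2 * v2) \<le> Au + Bv"
      unfolding Au_def Bv_def by (metis add.assoc norm_triangle_ineq)
    then have "cmod(u + c1 * v1 + c2 * v2)^2 \<le> (Au + Bv)^2" by (simp add: power_mono)
    ultimately show "cmod(u + c1 * v1 + c2 * v2)^2 \<le> cmod v1^2 + cmod v2^2 + P" unfolding V_def by simp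
  qed
qed



lemma I1:
  fixes w2 a1 a2 b1 :: complex and d1 :: real
  shows "(1 - cmod w2^2) * ((d1 - cmod a1^2 - cmod b1^2) * ((1 - cmod w2^2) - cmod a2^2) - cmod (-(a1 * cnj w2 + b1 * cnj a2))^2)
    = (d1 * (1 - cmod w2^2) - cmod a1^2) * ((1 - cmod w2^2) - cmod a2^2) - cmod (b1 * complex_of_real (1 - cmod w2^2) + a1 * a2 * cnj w2)^2"
  unfolding cmod_power2 by (simp add: algebra_simps power2_eq_square)

lemma I2:
  fixes g b2 B :: complex and e A D :: real
  shows "D * ((e*A - cmod g^2) * (e*D - cmod b2^2) - cmod (of_real e*B - g * cnj b2)^2)
   = e * ((A*D - cmod B^2) * (e*D - cmod b2^2) - cmod (g * complex_of_real D - b2 * B)^2)"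
  unfolding cmod_power2 by (simp add: algebra_simps power2_eq_square)

lemma I3:
  fixes w2 a1 a2 b1 :: complex and d1 d2 :: real
  assumes "d2 = 1 - cmod w2^2" "d2 > 0" "cmod a2^2 = d2" "b1 * of_real d2 = - (a1 * a2 * cnj w2)"
  shows "d2 * (d1 - cmod a1^2 - cmod b1^2) = d1 * d2 - cmod a1^2"
proof -
  have "cmod (b1 * of_real d2)^2 = cmod (a1 * a2 * cnj w2)^2" using assms(4) by (metis norm_minus_cancel)
  then have "cmod b1^2 * d2^2 = cmod a1^2 * cmod a2^2 * cmod w2^2"
    using assms(2) by (simp add: norm_mult power_mult_distrib)
  moreover have "cmod w2^2 = 1 - d2" using assms(1) by simp
  ultimately have "cmod b1^2 * d2^2 = cmod a1^2 * d2 * (1 - d2)"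
    using assms(3) by simp
  then have "cmod b1^2 * d2 = cmod a1^2 * (1 - d2)"
    using assms(2) by (simp add: power2_eq_square)
  then show ?thesis by (simp add: algebra_simps)
qed

lemma final:
  fixes w2 a1 a2 a3 b1 b2 g :: complex and d1 d2 d4 :: real
  assumes d2: "d2 = 1 - cmod w2^2" and d2p: "0 < d2"
  defines "e \<equiv> d4 - cmod a3^2"
  defines "A \<equiv> d1 - cmod a1^2 - cmod b1^2" and "D \<equiv> d2 - cmod a2^2" and "Bp \<equiv> -(a1 * cnj w2 + b1 * cnj a2)"
  shows "(0 \<le> e \<and> (0 \<le> A \<and> 0 \<le> D \<and> cmod Bp^2 \<le> A*D) \<and>
          (0 \<le> e*A - cmod g^2 \<and> 0 \<le> e*D - cmod b2^2 \<and>
           cmod (of_real e * Bp - g * cnj b2)^2 \<le> (e*A - cmod g^2)*(e*D - cmod b2^2)))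
   \<longleftrightarrow>
    ( (norm a1)\<^sup>2 \<le> d1 * d2 \<and> (norm a3)\<^sup>2 \<le> d4 \<and> (norm a2)\<^sup>2 = d2 \<and>
      b1 = - (a1 * a2 * cnj w2) / complex_of_real d2 \<and> b2 = 0 \<and>
      (norm g)\<^sup>2 * d2 \<le> (d1 * d2 - (norm a1)\<^sup>2) * (d4 - (norm a3)\<^sup>2) )
    \<or>
    ( (norm a1)\<^sup>2 \<le> d1 * d2 \<and> (norm a3)\<^sup>2 \<le> d4 \<and> (norm a2)\<^sup>2 < d2 \<and>
      (norm (b1 * complex_of_real d2 + a1 * a2 * cnj w2))\<^sup>2
         \<le> (d1 * d2 - (norm a1)\<^sup>2) * (d2 - (norm a2)\<^sup>2) \<and>
      (norm b2)\<^sup>2 \<le> (d2 - (norm a2)\<^sup>2) * (d4 - (norm a3)\<^sup>2) \<and>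
      (norm (g * complex_of_real (d2 - (norm a2)\<^sup>2) + b2 * (cnj w2 * a1 + cnj a2 * b1)))\<^sup>2 * d2
         \<le> ((d1 * d2 - (norm a1)\<^sup>2) * (d2 - (norm a2)\<^sup>2)
               - (norm (b1 * complex_of_real d2 + a1 * a2 * cnj w2))\<^sup>2)
           * ((d2 - (norm a2)\<^sup>2) * (d4 - (norm a3)\<^sup>2) - (norm b2)\<^sup>2) )"
  (is "?L \<longleftrightarrow> ?PA \<or> ?PB")
proof -
  define K1 where "K1 = d1 * d2 - cmod a1^2"
  define E where "E = cmod (b1 * complex_of_real d2 + a1 * a2 * cnj w2)^2"
  define G where "G = K1 * D - E"
  define dP where "dP = A*D - cmod Bp^2"
  define AQ where "AQ = e*A - cmod g^2"
  define CQ where "CQ = e*D - cmod b2^2"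
  define BQ where "BQ = of_real e * Bp - g * cnj b2"
  define X where "X = g * complex_of_real D - b2 * Bp"
  define W where "W = dP * CQ - cmod X^2"
  have i1: "d2 * dP = G"
    unfolding dP_def G_def K1_def E_def A_def D_def Bp_def d2 by (rule I1)
  have i2: "D * (AQ * CQ - cmod BQ^2) = e * W"
    unfolding AQ_def CQ_def BQ_def W_def dP_def X_def by (rule I2)
  have i4: "g * complex_of_real (d2 - (norm a2)\<^sup>2) + b2 * (cnj w2 * a1 + cnj a2 * b1) = X"
    unfolding X_def D_def Bp_def by (simp add: algebra_simps)
  have E0: "0 \<le> E" by (simp add: E_def)
  have PA: "?PA \<longleftrightarrow> 0 \<le> K1 \<and> 0 \<le> e \<and> D = 0 \<and> b1 * of_real d2 = - (a1 * a2 * cnj w2) \<and> b2 = 0 \<and> cmod g^2 * d2 \<le> K1 * e"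
    using d2p by (auto simp: K1_def e_def D_def field_simps)
  have PB: "?PB \<longleftrightarrow> 0 \<le> K1 \<and> 0 \<le> e \<and> 0 < D \<and> E \<le> K1 * D \<and> 0 \<le> CQ \<and> cmod X^2 * d2 \<le> G * CQ"
    unfolding i4 by (auto simp: K1_def e_def D_def E_def G_def CQ_def mult.commute)
  have L: "?L \<longleftrightarrow> 0 \<le> e \<and> 0 \<le> A \<and> 0 \<le> D \<and> 0 \<le> dP \<and> 0 \<le> AQ \<and> 0 \<le> CQ \<and> 0 \<le> AQ * CQ - cmod BQ^2"
    by (auto simp: dP_def AQ_def CQ_def BQ_def)
  have Ap: "0 \<le> A" if "0 \<le> dP" "D > 0" for dummy :: bool
  proof -
    have "0 \<le> A * D" using that unfolding dP_def by (smt (verit) zero_le_power2)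
    then show ?thesis using that(2) by (simp add: zero_le_mult_iff)
  qed
  show ?thesis
  proof (cases "D = 0")
    case True
    have EB: "E = d2 * cmod Bp^2" using i1 True by (simp add: dP_def G_def)
    have bB: "b1 * of_real d2 = -(a1*a2*cnj w2) \<longleftrightarrow> Bp = 0"
    proof -
      have "b1 * of_real d2 = -(a1*a2*cnj w2) \<longleftrightarrow> b1 * of_real d2 + a1*a2*cnj w2 = 0"
        by (rule eq_neg_iff_add_eq_0)
      also have "\<dots> \<longleftrightarrow> E = 0" by (simp add: E_def)
      also have "\<dots> \<longleftrightarrow> Bp = 0" using EB d2p by simp
      finally show ?thesis .
    qed
    have a2: "cmod a2^2 = d2" using True by (simp add: D_def)
    have AK: "d2 * A = K1" if "Bp = 0"
      unfolding A_def K1_def using I3[OF d2 d2p a2] bB that by simp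
    show ?thesis unfolding L PA PB
    proof
      assume H: "0 \<le> e \<and> 0 \<le> A \<and> 0 \<le> D \<and> 0 \<le> dP \<and> 0 \<le> AQ \<and> 0 \<le> CQ \<and> 0 \<le> AQ * CQ - cmod BQ^2"
      have B0: "Bp = 0" using H True by (simp add: dP_def)
      have b20: "b2 = 0" using H True by (simp add: CQ_def)
      have K: "0 \<le> K1" using AK[OF B0] H d2p by (metis mult_nonneg_nonneg less_imp_le)
      have "cmod g^2 \<le> e * A" using H by (simp add: AQ_def)
      then have "cmod g^2 * d2 \<le> e * A * d2" using d2p by simp
      moreover have "e * A * d2 = K1 * e" using AK[OF B0] by (metis mult.commute mult.left_commute)
      ultimately have "cmod g^2 * d2 \<le> K1 * e" by simp
      then show "(0 \<le> K1 \<and> 0 \<le> e \<and> D = 0 \<and> b1 * of_real d2 = - (a1 * a2 * cnj w2) \<and> b2 = 0 \<and> cmod g^2 * d2 \<le> K1 * e) \<or>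
        (0 \<le> K1 \<and> 0 \<le> e \<and> 0 < D \<and> E \<le> K1 * D \<and> 0 \<le> CQ \<and> cmod X^2 * d2 \<le> G * CQ)"
        using K H True B0 bB b20 by simp
    next
      assume "(0 \<le> K1 \<and> 0 \<le> e \<and> D = 0 \<and> b1 * of_real d2 = - (a1 * a2 * cnj w2) \<and> b2 = 0 \<and> cmod g^2 * d2 \<le> K1 * e) \<or>
        (0 \<le> K1 \<and> 0 \<le> e \<and> 0 < D \<and> E \<le> K1 * D \<and> 0 \<le> CQ \<and> cmod X^2 * d2 \<le> G * CQ)"
      then have H: "0 \<le> K1 \<and> 0 \<le> e \<and> b1 * of_real d2 = - (a1 * a2 * cnj w2) \<and> b2 = 0 \<and> cmod g^2 * d2 \<le> K1 * e"
        using True by auto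
      have B0: "Bp = 0" using H bB by simp
      have dA: "d2 * A = K1" using AK[OF B0] .
      have A0: "0 \<le> A" using dA H d2p by (metis zero_le_mult_iff not_less)
      have "d2 * AQ = e * K1 - cmod g^2 * d2" unfolding AQ_def using dA by (simp add: algebra_simps)
      then have "0 \<le> d2 * AQ" using H by (simp add: mult.commute)
      then have AQ0: "0 \<le> AQ" using d2p by (simp add: zero_le_mult_iff)
      show "0 \<le> e \<and> 0 \<le> A \<and> 0 \<le> D \<and> 0 \<le> dP \<and> 0 \<le> AQ \<and> 0 \<le> CQ \<and> 0 \<le> AQ * CQ - cmod BQ^2"
        using H A0 AQ0 True B0 by (simp add: dP_def CQ_def BQ_def)
    qed
  next
    case False
    show ?thesis
    proof (cases "D > 0")
      case False2: False
      with False have "\<not> 0 \<le> D" "D \<noteq> 0" "\<not> 0 < D" by simp_all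
      then show ?thesis unfolding L PA PB by (simp only: simp_thms)
    next
      case Dp: True
      show ?thesis unfolding L PA PB
      proof
        assume H: "0 \<le> e \<and> 0 \<le> A \<and> 0 \<le> D \<and> 0 \<le> dP \<and> 0 \<le> AQ \<and> 0 \<le> CQ \<and> 0 \<le> AQ * CQ - cmod BQ^2"
        have G0: "0 \<le> G" using i1 H d2p by (metis zero_le_mult_iff less_le)
        then have EK: "E \<le> K1 * D" by (simp add: G_def)
        then have "0 \<le> K1 * D" using E0 by simp
        then have K: "0 \<le> K1" using Dp by (simp add: zero_le_mult_iff)
        have W0: "0 \<le> W"
        proof (cases "e = 0")
          case True
          then have "b2 = 0" "g = 0" using H by (simp_all add: CQ_def AQ_def)
          then show ?thesis using True by (simp add: W_def CQ_def X_def)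
        next
          case False
          then have ep: "e > 0" using H by simp
          have "0 \<le> D * (AQ * CQ - cmod BQ^2)" using H Dp by simp
          then have "0 \<le> e * W" using i2 by simp
          then show ?thesis using ep by (simp add: zero_le_mult_iff)
        qed
        have "cmod X^2 * d2 \<le> G * CQ"
        proof -
          have "cmod X^2 \<le> dP * CQ" using W0 by (simp add: W_def)
          then have "cmod X^2 * d2 \<le> dP * CQ * d2" using d2p by simp
          then show ?thesis using i1 by (simp add: algebra_simps)
        qed
        then show "(0 \<le> K1 \<and> 0 \<le> e \<and> D = 0 \<and> b1 * of_real d2 = - (a1 * a2 * cnj w2) \<and> b2 = 0 \<and> cmod g^2 * d2 \<le> K1 * e) \<or>
          (0 \<le> K1 \<and> 0 \<le> e \<and> 0 < D \<and> E \<le> K1 * D \<and> 0 \<le> CQ \<and> cmod X^2 * d2 \<le> G * CQ)"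
          using K H Dp EK by simp
      next
        assume "(0 \<le> K1 \<and> 0 \<le> e \<and> D = 0 \<and> b1 * of_real d2 = - (a1 * a2 * cnj w2) \<and> b2 = 0 \<and> cmod g^2 * d2 \<le> K1 * e) \<or>
          (0 \<le> K1 \<and> 0 \<le> e \<and> 0 < D \<and> E \<le> K1 * D \<and> 0 \<le> CQ \<and> cmod X^2 * d2 \<le> G * CQ)"
        then have H: "0 \<le> K1 \<and> 0 \<le> e \<and> E \<le> K1 * D \<and> 0 \<le> CQ \<and> cmod X^2 * d2 \<le> G * CQ"
          using Dp by auto
        have "0 \<le> d2 * dP" using i1 H by (simp add: G_def)
        then have dP0: "0 \<le> dP" using d2p by (simp add: zero_le_mult_iff)
        have A0: "0 \<le> A" using Ap[OF dP0 Dp] .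
        have "cmod X^2 * d2 \<le> (dP * CQ) * d2" using H i1 by (simp add: algebra_simps)
        then have "cmod X^2 \<le> dP * CQ" using d2p by simp
        then have W0: "0 \<le> W" by (simp add: W_def)
        have "0 \<le> D * (AQ * CQ - cmod BQ^2)" using i2 W0 H by simp
        then have dQ: "0 \<le> AQ * CQ - cmod BQ^2" using Dp by (simp add: zero_le_mult_iff)
        have AQ0: "0 \<le> AQ"
        proof (cases "CQ = 0")
          case False
          then have "CQ > 0" using H by simp
          moreover have "0 \<le> AQ * CQ" using dQ by (smt (verit) zero_le_power2)
          ultimately show ?thesis by (simp add: zero_le_mult_iff)
        next
          case True
          then have "X = 0" using W0 by (simp add: W_def)
          then have gD: "g * of_real D = b2 * Bp" by (simp add: X_def)
          have b2n: "cmod b2^2 = e * D" using True by (simp add: CQ_def)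
          have "cmod g^2 * D^2 = cmod b2^2 * cmod Bp^2"
          proof -
            have "cmod (g * of_real D)^2 = cmod (b2 * Bp)^2" using gD by simp
            then show ?thesis using Dp by (simp add: norm_mult power_mult_distrib)
          qed
          then have "cmod g^2 * D * D = e * cmod Bp^2 * D" using b2n by (simp add: power2_eq_square algebra_simps)
          then have "cmod g^2 * D = e * cmod Bp^2" using Dp by simp
          then have "D * AQ = e * dP" unfolding AQ_def dP_def by (simp add: algebra_simps)
          then have "0 \<le> D * AQ" using H dP0 by simp
          then show ?thesis using Dp by (simp add: zero_le_mult_iff)
        qed
        show "0 \<le> e \<and> 0 \<le> A \<and> 0 \<le> D \<and> 0 \<le> dP \<and> 0 \<le> AQ \<and> 0 \<le> CQ \<and> 0 \<le> AQ * CQ - cmod BQ^2"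
          using H A0 Dp dP0 AQ0 dQ by simp
      qed
    qed
  qed
qed


lemma Tmat_rows:
  "Tmat w1 w2 w4 a1 a2 a3 b1 b2 g $ 1 = vector [w1, a1, b1, g]"
  "Tmat w1 w2 w4 a1 a2 a3 b1 b2 g $ 2 = vector [0, w2, a2, b2]"
  "Tmat w1 w2 w4 a1 a2 a3 b1 b2 g $ 3 = vector [0, 0, 0, a3]"
  "Tmat w1 w2 w4 a1 a2 a3 b1 b2 g $ 4 = vector [0, 0, 0, w4]"
  unfolding Tmat_def by (simp_all only: vector_4)

lemma comp: "cadj (Tmat w1 w2 w4 a1 a2 a3 b1 b2 g) *v y = vector [cnj w1 * y$1, cnj a1 * y$1 + cnj w2 * y$2, cnj b1 * y$1 + cnj a2 * y$2,
      cnj g * y$1 + cnj b2 * y$2 + cnj a3 * y$3 + cnj w4 * y$4]"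
  unfolding vec_eq_iff forall_4 matrix_vector_mult_def cadj_def sum_4
  by (simp add: Tmat_rows)

lemma explicit_form:
  "contraction (Tmat w1 w2 w4 a1 a2 a3 b1 b2 g) \<longleftrightarrow>
   (\<forall>y1 y2 y3 y4. cmod (cnj w1 * y1)^2 + cmod (cnj a1 * y1 + cnj w2 * y2)^2 + cmod (cnj b1 * y1 + cnj a2 * y2)^2
      + cmod (cnj g * y1 + cnj b2 * y2 + cnj a3 * y3 + cnj w4 * y4)^2
      \<le> cmod y1^2 + cmod y2^2 + cmod y3^2 + cmod y4^2)"
proof -
  let ?T = "Tmat w1 w2 w4 a1 a2 a3 b1 b2 g"
  have nle: "norm a \<le> norm b \<longleftrightarrow> norm a^2 \<le> norm b^2" for a b :: "complex^4"
    by (simp add: power_mono_iff)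
  have "contraction ?T \<longleftrightarrow> (\<forall>y. norm (cadj ?T *v y) \<le> norm y)"
    unfolding contr_iff by (rule contr_adj)
  also have "\<dots> \<longleftrightarrow> (\<forall>y. norm (cadj ?T *v y)^2 \<le> norm y^2)"
    by (simp only: nle)
  also have "\<dots> \<longleftrightarrow> (\<forall>y1 y2 y3 y4. cmod (cnj w1 * y1)^2 + cmod (cnj a1 * y1 + cnj w2 * y2)^2 + cmod (cnj b1 * y1 + cnj a2 * y2)^2
      + cmod (cnj g * y1 + cnj b2 * y2 + cnj a3 * y3 + cnj w4 * y4)^2
      \<le> cmod y1^2 + cmod y2^2 + cmod y3^2 + cmod y4^2)"
  proof
    assume H: "\<forall>y. norm (cadj ?T *v y)^2 \<le> norm y^2"
    show "\<forall>y1 y2 y3 y4. cmod (cnj w1 * y1)^2 + cmod (cnj a1 * y1 + cnj w2 * y2)^2 + cmod (cnj b1 * y1 + cnj a2 * y2)^2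
      + cmod (cnj g * y1 + cnj b2 * y2 + cnj a3 * y3 + cnj w4 * y4)^2
      \<le> cmod y1^2 + cmod y2^2 + cmod y3^2 + cmod y4^2"
    proof (intro allI)
      fix y1 y2 y3 y4 :: complex
      show "cmod (cnj w1 * y1)^2 + cmod (cnj a1 * y1 + cnj w2 * y2)^2 + cmod (cnj b1 * y1 + cnj a2 * y2)^2
      + cmod (cnj g * y1 + cnj b2 * y2 + cnj a3 * y3 + cnj w4 * y4)^2
      \<le> cmod y1^2 + cmod y2^2 + cmod y3^2 + cmod y4^2"
        using H[rule_format, of "vector [y1, y2, y3, y4]"] by (simp only: comp norm4 vector_4)
    qed
  next
    assume H: "\<forall>y1 y2 y3 y4. cmod (cnj w1 * y1)^2 + cmod (cnj a1 * y1 + cnj w2 * y2)^2 + cmod (cnj b1 * y1 + cnj a2 * y2)^2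
      + cmod (cnj g * y1 + cnj b2 * y2 + cnj a3 * y3 + cnj w4 * y4)^2
      \<le> cmod y1^2 + cmod y2^2 + cmod y3^2 + cmod y4^2"
    show "\<forall>y. norm (cadj ?T *v y)^2 \<le> norm y^2"
    proof
      fix y :: "complex^4"
      show "norm (cadj ?T *v y)^2 \<le> norm y^2"
        using H[rule_format, of "y$1" "y$2" "y$3" "y$4"] by (simp only: comp norm4 vector_4)
    qed
  qed
  finally show ?thesis .
qed


lemma P_form:
  fixes w1 w2 a1 a2 b1 y1 y2 :: complex
  shows "cmod y1^2 + cmod y2^2 - cmod (cnj w1 * y1)^2 - cmod (cnj a1 * y1 + cnj w2 * y2)^2 - cmod (cnj b1 * y1 + cnj a2 * y2)^2
   = ((1 - cmod w1^2) - cmod a1^2 - cmod b1^2) * cmod y1^2 + ((1 - cmod w2^2) - cmod a2^2) * cmod y2^2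
     + 2 * Re (-(a1 * cnj w2 + b1 * cnj a2) * cnj y1 * y2)"
  unfolding cmod_power2 by (simp add: algebra_simps power2_eq_square)

lemma Q_form:
  fixes g b2 B y1 y2 :: complex and e A D :: real
  shows "e * (A * cmod y1^2 + D * cmod y2^2 + 2 * Re (B * cnj y1 * y2)) - cmod (cnj g * y1 + cnj b2 * y2)^2
   = (e*A - cmod g^2) * cmod y1^2 + (e*D - cmod b2^2) * cmod y2^2 + 2 * Re ((of_real e * B - g * cnj b2) * cnj y1 * y2)"
  unfolding cmod_power2 by (simp add: algebra_simps power2_eq_square)

theorem lemma2p2:
  fixes w1 w2 w4 a1 a2 a3 b1 b2 g :: complex
  assumes "norm w2 < 1" and "norm w1 \<le> 1" and "norm w4 \<le> 1"
  defines "d1 \<equiv> 1 - (norm w1)\<^sup>2" and "d2 \<equiv> 1 - (norm w2)\<^sup>2" and "d4 \<equiv> 1 - (norm w4)\<^sup>2"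
  shows "contraction (Tmat w1 w2 w4 a1 a2 a3 b1 b2 g) \<longleftrightarrow>
    ( (norm a1)\<^sup>2 \<le> d1 * d2 \<and> (norm a3)\<^sup>2 \<le> d4 \<and> (norm a2)\<^sup>2 = d2 \<and>
      b1 = - (a1 * a2 * cnj w2) / complex_of_real d2 \<and> b2 = 0 \<and>
      (norm g)\<^sup>2 * d2 \<le> (d1 * d2 - (norm a1)\<^sup>2) * (d4 - (norm a3)\<^sup>2) )
    \<or>
    ( (norm a1)\<^sup>2 \<le> d1 * d2 \<and> (norm a3)\<^sup>2 \<le> d4 \<and> (norm a2)\<^sup>2 < d2 \<and>
      (norm (b1 * complex_of_real d2 + a1 * a2 * cnj w2))\<^sup>2
         \<le> (d1 * d2 - (norm a1)\<^sup>2) * (d2 - (norm a2)\<^sup>2) \<and>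
      (norm b2)\<^sup>2 \<le> (d2 - (norm a2)\<^sup>2) * (d4 - (norm a3)\<^sup>2) \<and>
      (norm (g * complex_of_real (d2 - (norm a2)\<^sup>2) + b2 * (cnj w2 * a1 + cnj a2 * b1)))\<^sup>2 * d2
         \<le> ((d1 * d2 - (norm a1)\<^sup>2) * (d2 - (norm a2)\<^sup>2)
               - (norm (b1 * complex_of_real d2 + a1 * a2 * cnj w2))\<^sup>2)
           * ((d2 - (norm a2)\<^sup>2) * (d4 - (norm a3)\<^sup>2) - (norm b2)\<^sup>2) )"
proof -
  define A where "A = d1 - cmod a1^2 - cmod b1^2"
  define D where "D = d2 - cmod a2^2"
  define Bp where "Bp = -(a1 * cnj w2 + b1 * cnj a2)"
  define e where "e = d4 - cmod a3^2"
  define Pf where "Pf = (\<lambda>y1 y2. A * cmod y1^2 + D * cmod y2^2 + 2 * Re (Bp * cnj y1 * y2))"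
  have d2p: "0 < d2" using assms(1) unfolding d2_def by (simp add: power_less_one_iff abs_less_iff)
  have ee: "e = 1 - cmod (cnj a3)^2 - cmod (cnj w4)^2" by (simp add: e_def d4_def)
  have step2: "(\<forall>y3 y4. cmod (cnj w1 * y1)^2 + cmod (cnj a1 * y1 + cnj w2 * y2)^2 + cmod (cnj b1 * y1 + cnj a2 * y2)^2
      + cmod (cnj g * y1 + cnj b2 * y2 + cnj a3 * y3 + cnj w4 * y4)^2
      \<le> cmod y1^2 + cmod y2^2 + cmod y3^2 + cmod y4^2) \<longleftrightarrow>
      (0 \<le> e \<and> 0 \<le> Pf y1 y2 \<and> cmod (cnj g * y1 + cnj b2 * y2)^2 \<le> e * Pf y1 y2)" for y1 y2
  proof -
    have pf: "Pf y1 y2 = cmod y1^2 + cmod y2^2 - cmod (cnj w1 * y1)^2 - cmod (cnj a1 * y1 + cnj w2 * y2)^2 - cmod (cnj b1 * y1 + cnj a2 * y2)^2"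
      unfolding Pf_def A_def D_def Bp_def d1_def d2_def by (rule P_form[symmetric])
    have "(\<forall>y3 y4. cmod (cnj w1 * y1)^2 + cmod (cnj a1 * y1 + cnj w2 * y2)^2 + cmod (cnj b1 * y1 + cnj a2 * y2)^2
      + cmod (cnj g * y1 + cnj b2 * y2 + cnj a3 * y3 + cnj w4 * y4)^2
      \<le> cmod y1^2 + cmod y2^2 + cmod y3^2 + cmod y4^2) \<longleftrightarrow>
      (\<forall>y3 y4. cmod ((cnj g * y1 + cnj b2 * y2) + cnj a3 * y3 + cnj w4 * y4)^2 \<le> cmod y3^2 + cmod y4^2 + Pf y1 y2)"
      unfolding pf by (intro iff_allI) linarith
    also have "\<dots> \<longleftrightarrow> (0 \<le> e \<and> 0 \<le> Pf y1 y2 \<and> cmod (cnj g * y1 + cnj b2 * y2)^2 \<le> e * Pf y1 y2)"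
      by (rule elim2[OF ee])
    finally show ?thesis .
  qed
  have X: "contraction (Tmat w1 w2 w4 a1 a2 a3 b1 b2 g) \<longleftrightarrow>
      (\<forall>y1 y2. 0 \<le> e \<and> 0 \<le> Pf y1 y2 \<and> cmod (cnj g * y1 + cnj b2 * y2)^2 \<le> e * Pf y1 y2)"
    unfolding explicit_form using step2 by blast
  also have "\<dots> \<longleftrightarrow> 0 \<le> e \<and> (\<forall>y1 y2. 0 \<le> Pf y1 y2) \<and> (\<forall>y1 y2. 0 \<le> e * Pf y1 y2 - cmod (cnj g * y1 + cnj b2 * y2)^2)"
    by auto
  also have "\<dots> \<longleftrightarrow> 0 \<le> e \<and> (0 \<le> A \<and> 0 \<le> D \<and> cmod Bp^2 \<le> A*D) \<and>
          (0 \<le> e*A - cmod g^2 \<and> 0 \<le> e*D - cmod b2^2 \<and>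
           cmod (of_real e * Bp - g * cnj b2)^2 \<le> (e*A - cmod g^2)*(e*D - cmod b2^2))"
    unfolding Pf_def Q_form herm2 ..
  finally have X: "contraction (Tmat w1 w2 w4 a1 a2 a3 b1 b2 g) \<longleftrightarrow> 0 \<le> e \<and> (0 \<le> A \<and> 0 \<le> D \<and> cmod Bp^2 \<le> A*D) \<and>
          (0 \<le> e*A - cmod g^2 \<and> 0 \<le> e*D - cmod b2^2 \<and>
           cmod (of_real e * Bp - g * cnj b2)^2 \<le> (e*A - cmod g^2)*(e*D - cmod b2^2))" .
  show ?thesis
    unfolding X e_def A_def D_def Bp_def by (rule final[OF meta_eq_to_obj_eq[OF d2_def] d2p])
qed

end
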